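(* Let $P$ be a finite up-regular order and let $R$ be its relatively maximum full trunk (which exists). Then $\mathrm{Height}(P\setminus R)\le \tfrac12\,\mathrm{Height}(P)$, where $P\setminus R$ denotes the induced suborder on $\mathrm{Dom}(P)\setminus R$.
   Context: Orders are partial orders; $x\sim y$ means $x\ne y$ and $x,y$ incomparable. For a finite order $Q$, $\mathrm{Height}(Q)$ is the maximum cardinality of a chain of $Q$ (0 if $Q$ is empty), and $\mathrm{Level}(x)=\sup\{\mathrm{Level}(y)+1:y<x\}$. An element $x$ of $P$ is up-regular if for all $y,z$ with $\mathrm{Level}(x)<\mathrm{Level}(y)=\mathrm{Level}(z)$ we have $x<y\iff x<z$; $P$ is up-regular if all its elements are. A trunk of $P$ is a subset $T$ such that for pairwise distinct $x,y,z\in T$, $x\sim y$ and $y\sim z$ imply $x\sim z$. A chain is maximum if it has maximum cardinality; a full trunk is a trunk containing a maximum chain; the relatively maximum full trunk is the full trunk that is the unique inclusion-maximal full trunk. *)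

theory Defs
  imports Main
begin

text \<open>A finite order is represented by a carrier set A (its domain) together with a
relation le that is a partial order on A.  Suborders are induced suborders on
subsets of A.\<close>

definition partial_order_on' :: "'a set \<Rightarrow> ('a \<Rightarrow> 'a \<Rightarrow> bool) \<Rightarrow> bool" where
  "partial_order_on' A le \<longleftrightarrow>
     (\<forall>x\<in>A. le x x) \<and>
     (\<forall>x\<in>A. \<forall>y\<in>A. le x y \<and> le y x \<longrightarrow> x = y) \<and>
     (\<forall>x\<in>A. \<forall>y\<in>A. \<forall>z\<in>A. le x y \<and> le y z \<longrightarrow> le x z)"

definition lt :: "('a \<Rightarrow> 'a \<Rightarrow> bool) \<Rightarrow> 'a \<Rightarrow> 'a \<Rightarrow> bool" where
  "lt le x y \<longleftrightarrow> le x y \<and> x \<noteq> y"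

definition incomp :: "('a \<Rightarrow> 'a \<Rightarrow> bool) \<Rightarrow> 'a \<Rightarrow> 'a \<Rightarrow> bool" where
  "incomp le x y \<longleftrightarrow> x \<noteq> y \<and> \<not> le x y \<and> \<not> le y x"

definition is_chain :: "('a \<Rightarrow> 'a \<Rightarrow> bool) \<Rightarrow> 'a set \<Rightarrow> bool" where
  "is_chain le C \<longleftrightarrow> (\<forall>x\<in>C. \<forall>y\<in>C. le x y \<or> le y x)"

definition height :: "('a \<Rightarrow> 'a \<Rightarrow> bool) \<Rightarrow> 'a set \<Rightarrow> nat" where
  "height le S = Max {card C | C. C \<subseteq> S \<and> is_chain le C}"

text \<open>Level(x) = sup {Level(y)+1 : y < x} (sup of the empty set = 0), defined by
well-founded recursion along the strict order of P.\<close>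
definition level :: "'a set \<Rightarrow> ('a \<Rightarrow> 'a \<Rightarrow> bool) \<Rightarrow> 'a \<Rightarrow> nat" where
  "level A le = wfrec {(y, x). y \<in> A \<and> x \<in> A \<and> lt le y x}
                  (\<lambda>f x. Sup ((\<lambda>y. f y + 1) ` {y \<in> A. lt le y x}))"

definition up_regular_elem :: "'a set \<Rightarrow> ('a \<Rightarrow> 'a \<Rightarrow> bool) \<Rightarrow> 'a \<Rightarrow> bool" where
  "up_regular_elem A le x \<longleftrightarrow>
     (\<forall>y\<in>A. \<forall>z\<in>A. level A le x < level A le y \<and> level A le y = level A le z
        \<longrightarrow> (lt le x y \<longleftrightarrow> lt le x z))"

definition up_regular :: "'a set \<Rightarrow> ('a \<Rightarrow> 'a \<Rightarrow> bool) \<Rightarrow> bool" where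
  "up_regular A le \<longleftrightarrow> (\<forall>x\<in>A. up_regular_elem A le x)"

definition is_trunk :: "'a set \<Rightarrow> ('a \<Rightarrow> 'a \<Rightarrow> bool) \<Rightarrow> 'a set \<Rightarrow> bool" where
  "is_trunk A le T \<longleftrightarrow> T \<subseteq> A \<and>
     (\<forall>x\<in>T. \<forall>y\<in>T. \<forall>z\<in>T. x \<noteq> y \<and> y \<noteq> z \<and> x \<noteq> z \<and> incomp le x y \<and> incomp le y z
        \<longrightarrow> incomp le x z)"

definition maximum_chain :: "'a set \<Rightarrow> ('a \<Rightarrow> 'a \<Rightarrow> bool) \<Rightarrow> 'a set \<Rightarrow> bool" where
  "maximum_chain A le C \<longleftrightarrow> C \<subseteq> A \<and> is_chain le C \<and> card C = height le A"

definition full_trunk :: "'a set \<Rightarrow> ('a \<Rightarrow> 'a \<Rightarrow> bool) \<Rightarrow> 'a set \<Rightarrow> bool" where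
  "full_trunk A le T \<longleftrightarrow> is_trunk A le T \<and> (\<exists>C. maximum_chain A le C \<and> C \<subseteq> T)"

definition maximal_full_trunk :: "'a set \<Rightarrow> ('a \<Rightarrow> 'a \<Rightarrow> bool) \<Rightarrow> 'a set \<Rightarrow> bool" where
  "maximal_full_trunk A le T \<longleftrightarrow> full_trunk A le T \<and>
     (\<forall>T'. full_trunk A le T' \<and> T \<subseteq> T' \<longrightarrow> T' = T)"

definition rel_max_full_trunk :: "'a set \<Rightarrow> ('a \<Rightarrow> 'a \<Rightarrow> bool) \<Rightarrow> 'a set \<Rightarrow> bool" where
  "rel_max_full_trunk A le R \<longleftrightarrow> maximal_full_trunk A le R \<and>
     (\<forall>T. maximal_full_trunk A le T \<longrightarrow> T = R)"

end

theory Submission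
  imports Defs
begin

locale fpo =
  fixes A :: "'a set" and le :: "'a \<Rightarrow> 'a \<Rightarrow> bool"
  assumes fin: "finite A" and po: "partial_order_on' A le"
begin

abbreviation "lv \<equiv> level A le"
definition "rr = {(y, x). y \<in> A \<and> x \<in> A \<and> lt le y x}"
abbreviation "h \<equiv> height le A"

lemma refl: "x \<in> A \<Longrightarrow> le x x"
  using po unfolding partial_order_on'_def by blast
lemma antisym: "x \<in> A \<Longrightarrow> y \<in> A \<Longrightarrow> le x y \<Longrightarrow> le y x \<Longrightarrow> x = y"
  using po unfolding partial_order_on'_def by blast
lemma trans: "x \<in> A \<Longrightarrow> y \<in> A \<Longrightarrow> z \<in> A \<Longrightarrow> le x y \<Longrightarrow> le y z \<Longrightarrow> le x z"
  using po unfolding partial_order_on'_def by blast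

lemma wf_rr: "wf rr"
proof -
  have "rr \<subseteq> A \<times> A" by (auto simp: rr_def)
  hence f: "finite rr" using fin by (meson finite_SigmaI finite_subset)
  have t: "trans rr" unfolding trans_def rr_def lt_def using trans antisym by blast
  have i: "irrefl rr" unfolding irrefl_def rr_def lt_def by blast
  have "acyclic rr" unfolding acyclic_irrefl using t i by (simp add: trancl_id)
  with f show ?thesis by (rule finite_acyclic_wf)
qed

lemma lv_eq: "x \<in> A \<Longrightarrow> lv x = Sup ((\<lambda>y. lv y + 1) ` {y \<in> A. lt le y x})"
proof -
  assume x: "x \<in> A"
  have eq: "lv \<equiv> wfrec rr (\<lambda>f x. Sup ((\<lambda>y. f y + 1) ` {y \<in> A. lt le y x}))"
    unfolding level_def rr_def by simp
  have "lv x = Sup ((\<lambda>y. cut lv rr x y + 1) ` {y \<in> A. lt le y x})"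
    using def_wfrec[OF eq wf_rr] by simp
  also have "\<dots> = Sup ((\<lambda>y. lv y + 1) ` {y \<in> A. lt le y x})"
    by (rule arg_cong[where f=Sup], rule image_cong) (auto simp: cut_apply rr_def x)
  finally show ?thesis .
qed

lemma lv_less: "x \<in> A \<Longrightarrow> y \<in> A \<Longrightarrow> lt le y x \<Longrightarrow> lv y < lv x"
proof -
  assume a: "x \<in> A" "y \<in> A" "lt le y x"
  have fs: "finite ((\<lambda>y. lv y + 1) ` {y \<in> A. lt le y x})" using fin by simp
  have "lv y + 1 \<in> (\<lambda>y. lv y + 1) ` {y \<in> A. lt le y x}" using a by blast
  hence "lv y + 1 \<le> Sup ((\<lambda>y. lv y + 1) ` {y \<in> A. lt le y x})"
    using fs by (simp add: le_cSup_finite)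
  thus ?thesis using lv_eq[OF a(1)] by simp
qed

lemma lv_pred: "x \<in> A \<Longrightarrow> lv x = Suc m \<Longrightarrow> \<exists>y\<in>A. lt le y x \<and> lv y = m"
proof -
  assume a: "x \<in> A" "lv x = Suc m"
  define S where "S = (\<lambda>y. lv y + 1) ` {y \<in> A. lt le y x}"
  have fs: "finite S" using fin by (simp add: S_def)
  have "lv x = Sup S" using lv_eq[OF a(1)] by (simp add: S_def)
  hence ne: "S \<noteq> {}" using a by auto
  hence "Sup S \<in> S" using fs by (simp add: Sup_nat_def)
  then obtain y where "y \<in> A" "lt le y x" "lv y + 1 = Sup S" by (auto simp: S_def)
  thus ?thesis using \<open>lv x = Sup S\<close> a by auto
qed

lemma lv_down: "x \<in> A \<Longrightarrow> \<exists>C\<subseteq>A. is_chain le C \<and> x \<in> C \<and> (\<forall>c\<in>C. le c x) \<and> lv ` C = {..lv x}"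
proof (induction "lv x" arbitrary: x)
  case 0
  show ?case
    by (rule exI[of _ "{x}"]) (use 0 refl in \<open>auto simp: is_chain_def\<close>)
next
  case (Suc m)
  obtain y where y: "y \<in> A" "lt le y x" "lv y = m" using lv_pred Suc by metis
  obtain C where C: "C \<subseteq> A" "is_chain le C" "y \<in> C" "\<forall>c\<in>C. le c y" "lv ` C = {..lv y}"
    using Suc(1)[of y] y by metis
  have cx: "\<forall>c\<in>C. le c x" using C y Suc(3) trans unfolding lt_def by blast
  show ?case
  proof (rule exI[of _ "insert x C"], intro conjI)
    show "is_chain le (insert x C)" using C(2) cx refl Suc(3) unfolding is_chain_def by blast
    show "lv ` insert x C = {..lv x}" using C(5) y Suc(2)[symmetric] by (auto simp: atMost_Suc)
  qed (use C cx Suc refl in auto)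
qed

lemma chain_lt: "is_chain le C \<Longrightarrow> C \<subseteq> A \<Longrightarrow> c \<in> C \<Longrightarrow> d \<in> C \<Longrightarrow> c \<noteq> d \<Longrightarrow> lt le c d \<or> lt le d c"
  unfolding is_chain_def lt_def by blast

lemma chain_inj: "is_chain le C \<Longrightarrow> C \<subseteq> A \<Longrightarrow> inj_on lv C"
  unfolding inj_on_def using chain_lt lv_less by (metis less_irrefl subsetD)

lemma chains_fin: "finite B \<Longrightarrow> finite {card C |C. C \<subseteq> B \<and> is_chain le C}"
proof -
  assume "finite B"
  have "{card C |C. C \<subseteq> B \<and> is_chain le C} \<subseteq> card ` Pow B" by auto
  thus ?thesis using \<open>finite B\<close> by (meson finite_Pow_iff finite_imageI finite_subset)
qed

lemma height_ge: "finite B \<Longrightarrow> C \<subseteq> B \<Longrightarrow> is_chain le C \<Longrightarrow> card C \<le> height le B"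
  unfolding height_def by (rule Max_ge[OF chains_fin]) auto

lemma height_ex: "finite B \<Longrightarrow> \<exists>C\<subseteq>B. is_chain le C \<and> card C = height le B"
proof -
  assume b: "finite B"
  have "{} \<subseteq> B \<and> is_chain le {}" by (simp add: is_chain_def)
  hence "{card C |C. C \<subseteq> B \<and> is_chain le C} \<noteq> {}" by blast
  hence "height le B \<in> {card C |C. C \<subseteq> B \<and> is_chain le C}"
    unfolding height_def using Max_in[OF chains_fin[OF b]] by blast
  thus ?thesis by auto
qed

lemma lv_lt_h: "x \<in> A \<Longrightarrow> lv x < h"
proof -
  assume x: "x \<in> A"
  obtain C where C: "C \<subseteq> A" "is_chain le C" "lv ` C = {..lv x}" using lv_down[OF x] by blast
  have "card (lv ` C) \<le> card C" using C fin by (meson card_image_le finite_subset)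
  moreover have "card C \<le> h" using height_ge[OF fin C(1,2)] .
  ultimately show ?thesis using C(3) by simp
qed

lemma chain_max: "C \<subseteq> A \<Longrightarrow> is_chain le C \<Longrightarrow> {..<h} \<subseteq> lv ` C \<Longrightarrow> maximum_chain A le C"
proof -
  assume C: "C \<subseteq> A" "is_chain le C" "{..<h} \<subseteq> lv ` C"
  have fC: "finite C" using C fin finite_subset by blast
  have "h \<le> card (lv ` C)" using card_mono[OF finite_imageI[OF fC] C(3)] by simp
  also have "\<dots> \<le> card C" using card_image_le[OF fC] .
  finally show ?thesis using height_ge[OF fin C(1,2)] C unfolding maximum_chain_def by simp
qed

lemma max_levels: "maximum_chain A le C \<Longrightarrow> lv ` C = {..<h}"
proof -
  assume m: "maximum_chain A le C"
  hence C: "C \<subseteq> A" "is_chain le C" "card C = h" unfolding maximum_chain_def by auto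
  have "lv ` C \<subseteq> {..<h}" using C lv_lt_h by auto
  moreover have "card (lv ` C) = card {..<h}" using card_image[OF chain_inj[OF C(2,1)]] C by simp
  ultimately show ?thesis using card_subset_eq by blast
qed

lemma max_ex: "\<exists>C. maximum_chain A le C"
  using height_ex[OF fin] unfolding maximum_chain_def by blast

definition "M = {x \<in> A. \<exists>C. maximum_chain A le C \<and> x \<in> C}"

lemma lv_in_max: "maximum_chain A le C \<Longrightarrow> x \<in> A \<Longrightarrow> \<exists>c\<in>C. lv c = lv x"
  using max_levels lv_lt_h by (metis imageE lessThan_iff)

lemma full_sub_M: "full_trunk A le T \<Longrightarrow> T \<subseteq> M"
proof
  fix x assume T: "full_trunk A le T" and xT: "x \<in> T"
  obtain C where C: "maximum_chain A le C" "C \<subseteq> T" and tr: "is_trunk A le T"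
    using T unfolding full_trunk_def by blast
  have TA: "T \<subseteq> A" using tr unfolding is_trunk_def by blast
  have x: "x \<in> A" using xT TA by blast
  have CA: "C \<subseteq> A" "is_chain le C" using C unfolding maximum_chain_def by auto
  show "x \<in> M"
  proof (cases "x \<in> C")
    case True thus ?thesis using C x unfolding M_def by blast
  next
    case False
    obtain c where c: "c \<in> C" "lv c = lv x" using lv_in_max[OF C(1) x] by blast
    have cx: "c \<noteq> x" using c False by blast
    have cA: "c \<in> A" using c CA by blast
    have n1: "\<not> le x c"
    proof
      assume "le x c" hence "lv x < lv c" using lv_less[OF cA x] cx unfolding lt_def by blast
      thus False using c by simp
    qed
    have n2: "\<not> le c x"
    proof
      assume "le c x" hence "lv c < lv x" using lv_less[OF x cA] cx unfolding lt_def by blast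
      thus False using c by simp
    qed
    have ic: "incomp le x c" unfolding incomp_def using cx n1 n2 by blast
    have trT: "\<And>u v w. u \<in> T \<Longrightarrow> v \<in> T \<Longrightarrow> w \<in> T \<Longrightarrow> u \<noteq> v \<Longrightarrow> v \<noteq> w \<Longrightarrow> u \<noteq> w
       \<Longrightarrow> incomp le u v \<Longrightarrow> incomp le v w \<Longrightarrow> incomp le u w"
      using tr unfolding is_trunk_def by blast
    define C' where "C' = insert x (C - {c})"
    have ch: "is_chain le C'"
      unfolding is_chain_def
    proof (intro ballI)
      fix u v assume uv: "u \<in> C'" "v \<in> C'"
      have comp: "le d x \<or> le x d" if d: "d \<in> C" "d \<noteq> c" for d
      proof (rule ccontr)
        assume "\<not> (le d x \<or> le x d)"
        hence "incomp le d x" using d False unfolding incomp_def by blast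
        moreover have "d \<in> T" "c \<in> T" using d c C(2) by auto
        moreover have "d \<noteq> x" using d False by blast
        ultimately have "incomp le d c" using trT[of d x c] ic xT d(2) cx by blast
        moreover have "le d c \<or> le c d" using CA(2) d c unfolding is_chain_def by blast
        ultimately show False unfolding incomp_def by blast
      qed
      have uv': "(u = x \<or> u \<in> C \<and> u \<noteq> c)" "(v = x \<or> v \<in> C \<and> v \<noteq> c)" using uv unfolding C'_def by auto
      show "le u v \<or> le v u"
        using uv'
      proof (elim disjE conjE)
        assume "u = x" "v = x" thus ?thesis using refl[OF x] by simp
      next
        assume "u = x" "v \<in> C" "v \<noteq> c" thus ?thesis using comp by blast
      next
        assume "v = x" "u \<in> C" "u \<noteq> c" thus ?thesis using comp by blast
      next
        assume "u \<in> C" "v \<in> C" thus ?thesis using CA(2) unfolding is_chain_def by blast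
      qed
    qed
    have "{..<h} \<subseteq> lv ` C'" using max_levels[OF C(1)] c unfolding C'_def by auto
    moreover have "C' \<subseteq> A" using CA x unfolding C'_def by blast
    ultimately have "maximum_chain A le C'" using chain_max ch by blast
    thus ?thesis using x unfolding M_def C'_def by blast
  qed
qed

end

locale fpo_ur = fpo +
  assumes ur: "up_regular A le"
begin

lemma urI: "x \<in> A \<Longrightarrow> y \<in> A \<Longrightarrow> z \<in> A \<Longrightarrow> lv x < lv y \<Longrightarrow> lv y = lv z \<Longrightarrow> lt le x y \<Longrightarrow> lt le x z"
  using ur unfolding up_regular_def up_regular_elem_def by blast

lemma M_lt: "x \<in> M \<Longrightarrow> y \<in> A \<Longrightarrow> lv x < lv y \<Longrightarrow> lt le x y"
proof -
  assume a: "x \<in> M" "y \<in> A" "lv x < lv y"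
  obtain C where C: "maximum_chain A le C" "x \<in> C" and x: "x \<in> A" using a unfolding M_def by blast
  have CA: "C \<subseteq> A" "is_chain le C" using C unfolding maximum_chain_def by auto
  obtain c where c: "c \<in> C" "lv c = lv y" using lv_in_max[OF C(1) a(2)] by blast
  have "c \<noteq> x" using c a by auto
  hence "lt le x c \<or> lt le c x" using chain_lt[OF CA(2,1)] c C by blast
  moreover have "\<not> lt le c x" using lv_less[of x c] c CA a x by auto
  ultimately have "lt le x c" by blast
  thus ?thesis using urI[of x c y] c CA a x by auto
qed

lemma M_incomp: "x \<in> M \<Longrightarrow> y \<in> M \<Longrightarrow> x \<noteq> y \<Longrightarrow> incomp le x y \<longleftrightarrow> lv x = lv y"
proof -
  assume a: "x \<in> M" "y \<in> M" "x \<noteq> y"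
  have A: "x \<in> A" "y \<in> A" using a unfolding M_def by auto
  show ?thesis
  proof
    assume "incomp le x y"
    thus "lv x = lv y" using M_lt[of x y] M_lt[of y x] a A unfolding incomp_def lt_def
      by (metis linorder_neqE_nat)
  next
    assume "lv x = lv y"
    thus "incomp le x y" using lv_less[of x y] lv_less[of y x] a A unfolding incomp_def lt_def
      by auto
  qed
qed

lemma M_trunk: "is_trunk A le M"
  unfolding is_trunk_def
proof (intro conjI ballI impI)
  show "M \<subseteq> A" unfolding M_def by auto
  fix x y z assume xyz: "x \<in> M" "y \<in> M" "z \<in> M"
    and h: "x \<noteq> y \<and> y \<noteq> z \<and> x \<noteq> z \<and> incomp le x y \<and> incomp le y z"
  thus "incomp le x z" using M_incomp by metis
qed

lemma M_full: "full_trunk A le M"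
proof -
  obtain C where "maximum_chain A le C" using max_ex by blast
  moreover hence "C \<subseteq> M" unfolding M_def maximum_chain_def by auto
  ultimately show ?thesis unfolding full_trunk_def using M_trunk by blast
qed

lemma M_rel: "rel_max_full_trunk A le M"
  unfolding rel_max_full_trunk_def maximal_full_trunk_def
  using M_full full_sub_M by blast

lemma not_M: "x \<in> A \<Longrightarrow> x \<notin> M \<Longrightarrow> Suc (lv x) < h \<and> (\<forall>y\<in>A. lv y = Suc (lv x) \<longrightarrow> \<not> lt le x y)"
proof -
  assume x: "x \<in> A" "x \<notin> M"
  obtain D where D: "D \<subseteq> A" "is_chain le D" "x \<in> D" "\<forall>c\<in>D. le c x" "lv ` D = {..lv x}"
    using lv_down[OF x(1)] by blast
  obtain C where C: "maximum_chain A le C" using max_ex by blast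
  have CA: "C \<subseteq> A" "is_chain le C" using C unfolding maximum_chain_def by auto
  have s: "Suc (lv x) < h"
  proof (rule ccontr)
    assume "\<not> Suc (lv x) < h"
    hence "{..<h} \<subseteq> lv ` D" using D(5) lv_lt_h[OF x(1)] by auto
    hence "maximum_chain A le D" using chain_max D by blast
    thus False using x D unfolding M_def by blast
  qed
  moreover have "\<not> lt le x y" if y: "y \<in> A" "lv y = Suc (lv x)" for y
  proof
    assume xy: "lt le x y"
    obtain c where c: "c \<in> C" "lv c = lv y" using lv_in_max[OF C y(1)] by blast
    have xc: "lt le x c" using urI[of x y c] xy y c CA x by auto
    define E where "E = D \<union> {c' \<in> C. lv x < lv c'}"
    have cc: "le c c'" if "c' \<in> C" "lv x < lv c'" for c'
    proof -
      have "c' = c \<or> lt le c c' \<or> lt le c' c" using chain_lt[OF CA(2,1)] that c by blast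
      moreover have "\<not> lt le c' c" using lv_less[of c c'] that c y CA by auto
      ultimately show ?thesis using refl CA c unfolding lt_def by auto
    qed
    have ch: "is_chain le E"
      unfolding is_chain_def
    proof (intro ballI)
      fix u v assume uv: "u \<in> E" "v \<in> E"
      have dc: "le d c'" if "d \<in> D" "c' \<in> C" "lv x < lv c'" for d c'
      proof -
        have "le d c" using trans[of d x c] D that xc CA c x unfolding lt_def by blast
        thus ?thesis using trans[of d c c'] cc[OF that(2,3)] D CA c that by blast
      qed
      show "le u v \<or> le v u" using uv dc D(2) CA(2) unfolding E_def is_chain_def by blast
    qed
    have "{..<h} \<subseteq> lv ` E"
    proof
      fix k assume k: "k \<in> {..<h}"
      show "k \<in> lv ` E"
      proof (cases "k \<le> lv x")
        case True thus ?thesis using D(5) unfolding E_def by auto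
      next
        case False
        then obtain c' where "c' \<in> C" "lv c' = k" using max_levels[OF C] k by (metis imageE)
        thus ?thesis using False unfolding E_def by force
      qed
    qed
    moreover have "E \<subseteq> A" using D CA unfolding E_def by blast
    ultimately have "maximum_chain A le E" using chain_max ch by blast
    thus False using x D unfolding M_def E_def by blast
  qed
  ultimately show ?thesis by blast
qed

lemma chain_out: "D \<subseteq> A - M \<Longrightarrow> is_chain le D \<Longrightarrow> 2 * card D \<le> h"
proof -
  assume D: "D \<subseteq> A - M" "is_chain le D"
  have DA: "D \<subseteq> A" using D by blast
  define g where "g = (\<lambda>(x, b::nat). lv x + b)"
  have inj: "inj_on g (D \<times> {0,1})"
  proof (rule inj_onI)
    fix p q assume p: "p \<in> D \<times> {0,1}" and q: "q \<in> D \<times> {0,1}" and e: "g p = g q"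
    obtain x b where pq1: "p = (x, b)" by (cases p)
    obtain y b' where pq2: "q = (y, b')" by (cases q)
    have key: "False" if "lt le u v" "u \<in> D" "v \<in> D" "lv u + c = lv v + c'" "c \<in> {0,1}" "c' \<in> {0,1}" for u v c c'
    proof -
      have "lv u < lv v" using lv_less that DA by auto
      moreover have "lv v \<noteq> Suc (lv u)" using not_M[of u] that D by blast
      ultimately show False using that by auto
    qed
    show "p = q"
    proof (cases "x = y")
      case True thus ?thesis using e pq1 pq2 g_def by simp
    next
      case False
      hence "lt le x y \<or> lt le y x" using chain_lt[OF D(2) DA] p q pq1 pq2 by auto
      thus ?thesis using key[of x y b b'] key[of y x b' b] e p q pq1 pq2 g_def by auto
    qed
  qed
  have "g ` (D \<times> {0,1}) \<subseteq> {..<h}" using not_M D unfolding g_def by fastforce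
  hence "card (D \<times> {0::nat,1}) \<le> card {..<h}" using card_inj_on_le[OF inj] by blast
  moreover have "finite D" using DA fin finite_subset by blast
  ultimately show ?thesis by (simp add: card_cartesian_product)
qed

end

theorem mainTheorem14:
  fixes A :: "'a set" and le :: "'a \<Rightarrow> 'a \<Rightarrow> bool"
  assumes "finite A" and "partial_order_on' A le" and "up_regular A le"
  shows "(\<exists>R. rel_max_full_trunk A le R) \<and>
         (\<forall>R. rel_max_full_trunk A le R \<longrightarrow> 2 * height le (A - R) \<le> height le A)"
proof -
  interpret fpo_ur A le using assms by (unfold_locales) auto
  have r: "rel_max_full_trunk A le M" by (rule M_rel)
  moreover have "2 * height le (A - R) \<le> height le A" if R: "rel_max_full_trunk A le R" for R
  proof -
    have "R = M" using r R unfolding rel_max_full_trunk_def by blast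
    obtain D where D: "D \<subseteq> A - M" "is_chain le D" "card D = height le (A - M)"
      using height_ex[of "A - M"] fin by blast
    show ?thesis using chain_out[OF D(1,2)] D(3) \<open>R = M\<close> by simp
  qed
  ultimately show ?thesis by blast
qed

end
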